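(* Let $t$ and $m$ be positive integers. Then there exist a constant $c>0$ and $X_0$ (depending on $m,t$) such that for all $X\ge X_0$, \[ \#\left\{ n\leq X : p_{mt,t}(n)\equiv 0\pmod{2} \right\} \geq c\sqrt{X/3}, \] i.e. $\#\{ n\leq X : p_{mt,t}(n)\equiv 0\pmod{2}\} \gg \sqrt{X/3}$ for large $X$.
   Context: A partition $\lambda$ of a non-negative integer $n$ is a non-increasing sequence of positive integers (its parts) summing to $n$. For positive integers $A$ and $a$, $\mathrm{mex}_{A,a}(\lambda)$ denotes the smallest positive integer congruent to $a$ modulo $A$ that is not a part of $\lambda$. Then $p_{A,a}(n)$ denotes the number of partitions $\lambda$ of $n$ satisfying $\mathrm{mex}_{A,a}(\lambda)\equiv a \pmod{2A}$. Here $n$ ranges over positive integers. *)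

theory Defs
  imports "HOL-Analysis.Analysis" "HOL-Library.Multiset"
begin

definition partitions :: "nat \<Rightarrow> nat multiset set" where
  "partitions n = {M. (\<forall>x \<in># M. 0 < x) \<and> sum_mset M = n}"

definition mex :: "nat \<Rightarrow> nat \<Rightarrow> nat multiset \<Rightarrow> nat" where
  "mex A a M = (LEAST k. 0 < k \<and> k mod A = a mod A \<and> k \<notin># M)"

definition p_mex :: "nat \<Rightarrow> nat \<Rightarrow> nat \<Rightarrow> nat" where
  "p_mex A a n = card {M \<in> partitions n. mex A a M mod (2 * A) = a mod (2 * A)}"

end

theory Submission
  imports Defs
begin


lemma mem_le_sum_mset: "(x::nat) \<in># M \<Longrightarrow> x \<le> sum_mset M"
  using sum_mset.remove by fastforce

lemma size_le_sum_mset_pos: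
  assumes "\<forall>x\<in>#M. 0 < (x::nat)" shows "size M \<le> sum_mset M"
  using assms
proof (induction M)
  case empty then show ?case by simp
next
  case (add x M) then show ?case by auto
qed

lemma finite_partitions: "finite (partitions n)"
proof -
  have "partitions n \<subseteq> (\<Union>k\<in>{..n}. multisets_of_size {1..n} k)"
  proof
    fix M assume "M \<in> partitions n"
    then have pos: "\<forall>x\<in>#M. 0 < x" and s: "sum_mset M = n" by (auto simp: partitions_def)
    have "set_mset M \<subseteq> {1..n}" using pos s mem_le_sum_mset by fastforce
    moreover have "size M \<le> n" using size_le_sum_mset_pos[OF pos] s by simp
    ultimately show "M \<in> (\<Union>k\<in>{..n}. multisets_of_size {1..n} k)"
      by (auto simp: multisets_of_size_def)
  qed
  then show ?thesis by (rule finite_subset) auto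
qed

section \<open>Involutions and parity\<close>

lemma even_card_fpf:
  assumes "finite Y" "\<And>y. y \<in> Y \<Longrightarrow> f y \<in> Y" "\<And>y. y \<in> Y \<Longrightarrow> f (f y) = y"
    "\<And>y. y \<in> Y \<Longrightarrow> f y \<noteq> y"
  shows "even (card Y)"
  using assms
proof (induction "card Y" arbitrary: Y rule: less_induct)
  case less
  have fin: "finite Y" using less.prems(1) .
  have cl: "\<And>y. y \<in> Y \<Longrightarrow> f y \<in> Y" using less.prems(2) .
  have inv: "\<And>y. y \<in> Y \<Longrightarrow> f (f y) = y" using less.prems(3) .
  have nf: "\<And>y. y \<in> Y \<Longrightarrow> f y \<noteq> y" using less.prems(4) .
  show ?case
  proof (cases "Y = {}")
    case True then show ?thesis by simp
  next
    case False
    then obtain y where y: "y \<in> Y" by auto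
    define Y' where "Y' = Y - {y, f y}"
    have fy: "f y \<in> Y" "f y \<noteq> y" using cl nf y by auto
    have sub: "{y, f y} \<subseteq> Y" using y fy by auto
    have c2: "card {y, f y} = 2" using fy by auto
    have "card Y' = card Y - card {y, f y}" unfolding Y'_def
      by (rule card_Diff_subset) (use sub in auto)
    moreover have "card {y, f y} \<le> card Y" by (rule card_mono[OF fin sub])
    ultimately have cY: "card Y = card Y' + 2" using c2 by simp
    have "even (card Y')"
    proof (rule less.hyps)
      show "card Y' < card Y" using cY by simp
      show "finite Y'" using fin unfolding Y'_def by simp
    next
      fix z assume z: "z \<in> Y'"
      have zY: "z \<in> Y" "z \<noteq> y" "z \<noteq> f y" using z unfolding Y'_def by auto
      have ffz: "f (f z) = z" using inv zY(1) by simp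
      have ffy: "f (f y) = y" using inv y by simp
      have a1: "f z \<noteq> y" using ffz zY(3) by auto
      have a2: "f z \<noteq> f y" using ffz ffy zY(2) by metis
      show "f z \<in> Y'" unfolding Y'_def using cl[OF zY(1)] a1 a2 by simp
      show "f (f z) = z" by (rule ffz)
      show "f z \<noteq> z" using nf zY(1) by simp
    qed
    then show ?thesis using cY by simp
  qed
qed

lemma card_parity_involution:
  assumes "finite X" "\<And>x. x \<in> X \<Longrightarrow> f x \<in> X" "\<And>x. x \<in> X \<Longrightarrow> f (f x) = x"
  shows "even (card X + card {x\<in>X. f x = x})"
proof -
  have "even (card {x\<in>X. f x \<noteq> x})"
    by (rule even_card_fpf[of _ f]) (use assms in auto)
  moreover have "card X = card {x\<in>X. f x = x} + card {x\<in>X. f x \<noteq> x}"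
  proof -
    have u: "{x\<in>X. f x = x} \<union> {x\<in>X. f x \<noteq> x} = X" by auto
    have "card ({x\<in>X. f x = x} \<union> {x\<in>X. f x \<noteq> x}) = card {x\<in>X. f x = x} + card {x\<in>X. f x \<noteq> x}"
      by (rule card_Un_disjoint) (use assms(1) in auto)
    then show ?thesis unfolding u .
  qed
  ultimately show ?thesis by simp
qed

section \<open>Distinct partitions and the pair involution\<close>

definition DP :: "nat \<Rightarrow> nat set set" where
  "DP d = {S. finite S \<and> 0 \<notin> S \<and> \<Sum>S = d}"

definition Qd :: "nat \<Rightarrow> nat" where "Qd d = card (DP d)"

definition pp :: "nat \<Rightarrow> nat" where "pp n = card (partitions n)"

lemma DP_sub: "DP d \<subseteq> Pow {1..d}"
proof
  fix S assume "S \<in> DP d"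
  then have S: "finite S" "0 \<notin> S" "\<Sum>S = d" by (auto simp: DP_def)
  have "x \<le> d" if "x \<in> S" for x using S that by (metis member_le_sum zero_le)
  then show "S \<in> Pow {1..d}" using S(2) by (auto simp: Suc_le_eq intro: gr0I)
qed

lemma finite_DP: "finite (DP d)"
  using DP_sub by (rule finite_subset) auto

definition PR :: "nat \<Rightarrow> (nat set \<times> nat multiset) set" where
  "PR m = {(S, M). finite S \<and> 0 \<notin> S \<and> (\<forall>x\<in>#M. 0 < x) \<and> \<Sum>S + sum_mset M = m}"

lemma PR_eq: "PR m = (\<Union>d\<in>{..m}. DP d \<times> partitions (m - d))"
  unfolding PR_def DP_def partitions_def by force

lemma card_PR: "card (PR m) = (\<Sum>d\<le>m. Qd d * pp (m - d))"
proof -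
  have "card (PR m) = (\<Sum>d\<le>m. card (DP d \<times> partitions (m - d)))"
    unfolding PR_eq
  proof (rule card_UN_disjoint)
    show "\<forall>i\<in>{..m}. finite (DP i \<times> partitions (m - i))"
      by (simp add: finite_DP finite_partitions)
  qed (auto simp: DP_def)
  then show ?thesis by (simp add: card_cartesian_product Qd_def pp_def)
qed

definition gi :: "nat set \<times> nat multiset \<Rightarrow> nat set \<times> nat multiset" where
  "gi = (\<lambda>(S, M). let s = Min (S \<union> set_mset M) in
     if s \<in> S then (S - {s}, add_mset s M) else (insert s S, M - {#s#}))"

lemma gi_props:
  assumes "p \<in> PR m" "m > 0"
  shows "gi p \<in> PR m" "gi (gi p) = p" "gi p \<noteq> p"
proof -
  obtain S M where p: "p = (S, M)" by (cases p)
  have S: "finite S" "0 \<notin> S" and M: "\<forall>x\<in>#M. 0 < x" and sm: "\<Sum>S + sum_mset M = m"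
    using assms p by (auto simp: PR_def)
  have ne: "S \<union> set_mset M \<noteq> {}" using sm assms(2) by auto
  define s where "s = Min (S \<union> set_mset M)"
  have fin: "finite (S \<union> set_mset M)" using S by auto
  have smem: "s \<in> S \<union> set_mset M" unfolding s_def using fin ne by (rule Min_in)
  have smin: "\<And>x. x \<in> S \<union> set_mset M \<Longrightarrow> s \<le> x" unfolding s_def using fin by auto
  have "gi p \<in> PR m \<and> gi (gi p) = p \<and> gi p \<noteq> p"
  proof (cases "s \<in> S")
    case True
    have g: "gi p = (S - {s}, add_mset s M)" unfolding gi_def p using True by (simp add: s_def Let_def)
    have e: "S - {s} \<union> set_mset (add_mset s M) = S \<union> set_mset M" using True by auto
    have "gi (S - {s}, add_mset s M) = (S, M)"
      apply (simp only: gi_def case_prod_conv e Let_def s_def[symmetric])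
      using True by (simp add: insert_absorb)
    then have g2: "gi (gi p) = (S, M)" using g by simp
    have spos: "0 < s" using True S(2) by (cases s) auto
    have "\<Sum>(S - {s}) + s = \<Sum>S" using sum.remove[OF S(1) True, of "\<lambda>x. x"] by simp
    then show ?thesis
      using g g2 p S M sm True spos by (auto simp: PR_def)
  next
    case False
    then have sM: "s \<in># M" using smem by auto
    have g: "gi p = (insert s S, M - {#s#})" unfolding gi_def p using False by (simp add: s_def Let_def)
    have e: "insert s S \<union> set_mset (M - {#s#}) = S \<union> set_mset M" using sM
    proof -
      have "set_mset M = insert s (set_mset (M - {#s#}))"
        by (metis insert_DiffM sM set_mset_add_mset_insert)
      then show ?thesis by auto
    qed
    have "gi (insert s S, M - {#s#}) = (S, M)"
      apply (simp only: gi_def case_prod_conv e Let_def s_def[symmetric])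
      using False sM by (simp add: insert_DiffM)
    then have g2: "gi (gi p) = (S, M)" using g by simp
    have "sum_mset M = s + sum_mset (M - {#s#})" using sM by (rule sum_mset.remove)
    moreover have "s > 0" using M sM by auto
    moreover have "\<forall>x\<in>#M - {#s#}. 0 < x" using M by (auto dest: in_diffD)
    ultimately show ?thesis
      using g g2 p S M sm False by (auto simp: PR_def)
  qed
  then show "gi p \<in> PR m" "gi (gi p) = p" "gi p \<noteq> p" by auto
qed

lemma finite_PR: "finite (PR m)"
  unfolding PR_eq by (auto simp: finite_DP finite_partitions)

lemma even_conv: "m > 0 \<Longrightarrow> even (\<Sum>d\<le>m. Qd d * pp (m - d))"
proof -
  assume m: "m > 0"
  have "even (card (PR m))"
    by (rule even_card_fpf[of _ gi]) (use gi_props[OF _ m] finite_PR in auto)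
  then show ?thesis by (simp add: card_PR)
qed


section \<open>Franklin involution\<close>


definition run :: "nat set \<Rightarrow> nat" where "run S = (LEAST i. Max S - i \<notin> S)"

definition fr :: "nat set \<Rightarrow> nat set" where
  "fr S = (if S = {} then S else
      if Min S \<le> run S \<and> 2 * Min S \<le> Max S then insert (Max S + 1) (S - {Min S, Max S + 1 - Min S})
      else if run S < Min S \<and> Max S \<noteq> 2 * run S then insert (run S) (insert (Max S - run S) (S - {Max S}))
      else S)"

lemma run_notin: "0 \<notin> S \<Longrightarrow> Max S - run S \<notin> S"
  unfolding run_def by (rule LeastI[of _ "Max S"]) simp

lemma run_in: "i < run S \<Longrightarrow> Max S - i \<in> S"
  unfolding run_def using not_less_Least by blast

lemma run_le: "Max S - i \<notin> S \<Longrightarrow> run S \<le> i"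
  unfolding run_def by (rule Least_le)

lemma run_pos: "finite S \<Longrightarrow> S \<noteq> {} \<Longrightarrow> 0 \<notin> S \<Longrightarrow> 0 < run S"
  using run_notin[of S] by (metis Max_in diff_zero gr0I)

lemma A_step:
  assumes fin: "finite S" and ne: "S \<noteq> {}" and z: "0 \<notin> S"
    and h1: "Min S \<le> run S" and h2: "2 * Min S \<le> Max S"
  defines "T \<equiv> insert (Max S + 1) (S - {Min S, Max S + 1 - Min S})"
  shows "finite T \<and> T \<noteq> {} \<and> 0 \<notin> T \<and> \<Sum>T = \<Sum>S \<and> fr T = S \<and> T \<noteq> S"
proof -
  define s where "s = Min S"
  define M where "M = Max S"
  define r where "r = run S"
  define u where "u = M + 1 - s"
  have sS: "s \<in> S" unfolding s_def using fin ne by simp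
  have s1: "s \<ge> 1" using sS z by (cases s) auto
  have smin: "\<And>x. x \<in> S \<Longrightarrow> s \<le> x" unfolding s_def using fin by simp
  have Mmax: "\<And>x. x \<in> S \<Longrightarrow> x \<le> M" unfolding M_def using fin by simp
  have hr: "s \<le> r" "2 * s \<le> M" using h1 h2 unfolding s_def r_def M_def by auto
  have uS: "u \<in> S"
  proof -
    have "M - (s - 1) \<in> S" unfolding M_def by (rule run_in) (use hr s1 in \<open>simp add: r_def\<close>)
    moreover have "M - (s - 1) = u" unfolding u_def using s1 hr by simp
    ultimately show ?thesis by simp
  qed
  have us: "u \<noteq> s" "s < u" unfolding u_def using hr by auto
  have M1: "M + 1 \<notin> S" using Mmax by fastforce
  have Tdef: "T = insert (M + 1) (S - {s, u})" unfolding T_def s_def M_def u_def by simp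
  have finT: "finite T" using fin Tdef by simp
  have z2: "0 \<notin> T" using z Tdef by auto
  have sumT: "\<Sum>T = \<Sum>S"
  proof -
    have "\<Sum>S = s + \<Sum>(S - {s})" using sum.remove[OF fin sS, of "\<lambda>x. x"] by simp
    moreover have "\<Sum>(S - {s}) = u + \<Sum>(S - {s} - {u})"
      using sum.remove[of "S - {s}" u "\<lambda>x. x"] fin uS us by simp
    moreover have "\<Sum>T = (M + 1) + \<Sum>(S - {s, u})" using Tdef M1 fin by simp
    moreover have "S - {s} - {u} = S - {s, u}" by auto
    moreover have "s + u = M + 1" unfolding u_def using hr by simp
    ultimately show ?thesis by simp
  qed
  have MT: "Max T = M + 1"
    by (rule Max_eqI) (use finT Tdef Mmax in \<open>auto intro: le_SucI\<close>)
  have Tgt: "\<And>y. y \<in> T \<Longrightarrow> s < y"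
  proof -
    fix y assume "y \<in> T"
    then have "y = M + 1 \<or> (y \<in> S \<and> y \<noteq> s)" using Tdef by auto
    then show "s < y" using smin hr by (auto simp: le_neq_implies_less)
  qed
  have neT: "T \<noteq> {}" using Tdef by simp
  have mT: "Min T > s" using Tgt finT neT by simp
  have rT: "run T = s"
    unfolding run_def
  proof (rule Least_equality)
    show "Max T - s \<notin> T" using MT Tdef us s1 unfolding u_def by auto
  next
    fix y assume y: "Max T - y \<notin> T"
    show "s \<le> y"
    proof (rule ccontr)
      assume "\<not> s \<le> y"
      then have ys: "y < s" by simp
      have "Max T - y \<in> T"
      proof (cases "y = 0")
        case True then show ?thesis using MT Tdef by simp
      next
        case False
        have "M - (y - 1) \<in> S" unfolding M_def by (rule run_in) (use ys hr False in \<open>simp add: r_def\<close>)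
        moreover have "M - (y - 1) = Max T - y" using MT False ys hr by simp
        moreover have "Max T - y \<noteq> s" "Max T - y \<noteq> u" using MT ys hr False unfolding u_def by auto
        ultimately show ?thesis using Tdef by auto
      qed
      then show False using y by simp
    qed
  qed
  have frT: "fr T = S"
  proof -
    have c1: "\<not> (Min T \<le> run T \<and> 2 * Min T \<le> Max T)" using mT rT by simp
    have c2: "run T < Min T \<and> Max T \<noteq> 2 * run T" using mT rT MT hr by simp
    have "fr T = insert s (insert (M + 1 - s) (T - {M + 1}))"
      unfolding fr_def using neT c1 c2 by (simp add: Let_def MT rT)
    also have "T - {M + 1} = S - {s, u}" using Tdef M1 by auto
    also have "insert s (insert (M + 1 - s) (S - {s, u})) = S" using sS uS unfolding u_def by auto
    finally show ?thesis .
  qed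
  have "T \<noteq> S" using Tdef M1 by auto
  then show ?thesis using finT neT z2 sumT frT by simp
qed

lemma B_step:
  assumes fin: "finite S" and ne: "S \<noteq> {}" and z: "0 \<notin> S"
    and h1: "run S < Min S" and h2: "Max S \<noteq> 2 * run S"
  defines "T \<equiv> insert (run S) (insert (Max S - run S) (S - {Max S}))"
  shows "finite T \<and> T \<noteq> {} \<and> 0 \<notin> T \<and> \<Sum>T = \<Sum>S \<and> fr T = S \<and> T \<noteq> S"
proof -
  define s where "s = Min S"
  define M where "M = Max S"
  define r where "r = run S"
  have sS: "s \<in> S" unfolding s_def using fin ne by simp
  have MS: "M \<in> S" unfolding M_def using fin ne by simp
  have smin: "\<And>x. x \<in> S \<Longrightarrow> s \<le> x" unfolding s_def using fin by simp
  have Mmax: "\<And>x. x \<in> S \<Longrightarrow> x \<le> M" unfolding M_def using fin by simp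
  have r1: "r \<ge> 1" unfolding r_def using run_pos[OF fin ne z] by simp
  have hr: "r < s" "M \<noteq> 2 * r" using h1 h2 unfolding s_def r_def M_def by auto
  have Mr: "M - r \<notin> S" unfolding M_def r_def using run_notin[OF z] .
  have rS: "r \<notin> S" using smin hr by force
  have "M - (r - 1) \<in> S" unfolding M_def by (rule run_in) (use r1 in \<open>simp add: r_def\<close>)
  then have "M - (r - 1) \<ge> s" using smin by blast
  then have M2: "M \<ge> 2 * r + 1" using hr r1 by linarith
  have Tdef: "T = insert r (insert (M - r) (S - {M}))" unfolding T_def r_def M_def by simp
  have finT: "finite T" using fin Tdef by simp
  have neT: "T \<noteq> {}" using Tdef by simp
  have z2: "0 \<notin> T" using z Tdef r1 M2 by auto
  have sumT: "\<Sum>T = \<Sum>S"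
  proof -
    have "\<Sum>S = M + \<Sum>(S - {M})" using sum.remove[OF fin MS, of "\<lambda>x. x"] by simp
    moreover have "\<Sum>T = r + ((M - r) + \<Sum>(S - {M}))" using Tdef fin Mr rS M2 by simp
    ultimately show ?thesis using M2 by simp
  qed
  have MT: "Max T = M - 1"
  proof (rule Max_eqI)
    show "finite T" by fact
    fix y assume "y \<in> T"
    then have "y = r \<or> y = M - r \<or> (y \<in> S \<and> y \<noteq> M)" using Tdef by auto
    moreover have "y \<le> M - 1" if "y \<in> S \<and> y \<noteq> M"
    proof -
      have "y \<le> M" "y \<noteq> M" using that Mmax by auto
      then show ?thesis by linarith
    qed
    ultimately show "y \<le> M - 1" using M2 r1 by auto
  next
    show "M - 1 \<in> T"
    proof (cases "r = 1")
      case True then show ?thesis using Tdef by simp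
    next
      case False
      have "M - 1 \<in> S" unfolding M_def by (rule run_in) (use False r1 in \<open>simp add: r_def\<close>)
      then show ?thesis using Tdef M2 by auto
    qed
  qed
  have mT: "Min T = r"
  proof (rule Min_eqI)
    show "finite T" by fact
    fix y assume "y \<in> T"
    then show "r \<le> y" using Tdef smin hr M2 by force
  next
    show "r \<in> T" using Tdef by simp
  qed
  have rT: "r \<le> run T"
  proof (rule ccontr)
    assume "\<not> r \<le> run T"
    then have lt: "run T < r" by simp
    have "Max T - run T \<in> T"
    proof (cases "run T = r - 1")
      case True
      then have "Max T - run T = M - r" using MT M2 r1 by simp
      then show ?thesis using Tdef by simp
    next
      case False
      have "M - (run T + 1) \<in> S" unfolding M_def by (rule run_in) (use False lt in \<open>simp add: r_def\<close>)
      moreover have "M - (run T + 1) = Max T - run T" using MT by simp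
      moreover have "M - (run T + 1) \<noteq> M" using M2 by simp
      ultimately show ?thesis using Tdef by auto
    qed
    then show False using run_notin[OF z2] by simp
  qed
  have frT: "fr T = S"
  proof -
    have c1: "Min T \<le> run T \<and> 2 * Min T \<le> Max T" using mT rT MT M2 by simp
    have "fr T = insert (M - 1 + 1) (T - {r, M - 1 + 1 - r})"
      unfolding fr_def using neT c1 by (simp add: Let_def MT mT)
    also have "M - 1 + 1 = M" using M2 by simp
    also have "T - {r, M - r} = S - {M}" using Tdef Mr rS M2 by auto
    also have "insert M (S - {M}) = S" using MS by auto
    finally show ?thesis .
  qed
  have "T \<noteq> S" using Tdef rS by auto
  then show ?thesis using finT neT z2 sumT frT by simp
qed

definition FS :: "nat \<Rightarrow> nat set" where "FS j = {j div 2 + 1 .. j}"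

lemma fixed_FS:
  assumes fin: "finite S" and z: "0 \<notin> S" and fx: "fr S = S"
  shows "\<exists>j. S = FS j"
proof (cases "S = {}")
  case True then show ?thesis by (intro exI[of _ 0]) (simp add: FS_def)
next
  case ne: False
  define s where "s = Min S"
  define M where "M = Max S"
  define r where "r = run S"
  have sS: "s \<in> S" unfolding s_def using fin ne by simp
  have s1: "s \<ge> 1" using sS z by (cases s) auto
  have smin: "\<And>x. x \<in> S \<Longrightarrow> s \<le> x" unfolding s_def using fin by simp
  have Mmax: "\<And>x. x \<in> S \<Longrightarrow> x \<le> M" unfolding M_def using fin by simp
  have nA: "\<not> (s \<le> r \<and> 2 * s \<le> M)"
  proof
    assume c: "s \<le> r \<and> 2 * s \<le> M"
    then have "fr S = insert (M+1) (S - {s, M+1-s})" unfolding fr_def s_def M_def r_def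
      using ne by (simp add: Let_def)
    moreover have "insert (M+1) (S - {s, M+1-s}) \<noteq> S"
      using A_step[OF fin ne z] c unfolding s_def M_def r_def by simp
    ultimately show False using fx by simp
  qed
  have nB: "\<not> (r < s \<and> M \<noteq> 2 * r)"
  proof
    assume c: "r < s \<and> M \<noteq> 2 * r"
    then have "fr S = insert r (insert (M-r) (S - {M}))" unfolding fr_def s_def M_def r_def
      using ne nA by (simp add: Let_def s_def M_def r_def)
    moreover have "insert r (insert (M-r) (S - {M})) \<noteq> S"
      using B_step[OF fin ne z] c unfolding s_def M_def r_def by simp
    ultimately show False using fx by simp
  qed
  show ?thesis
  proof (cases "s \<le> r")
    case True
    then have M2: "M < 2 * s" using nA by simp
    have Seq: "S = {s..M}"
    proof
      show "S \<subseteq> {s..M}" using smin Mmax by auto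
      show "{s..M} \<subseteq> S"
      proof
        fix x assume x: "x \<in> {s..M}"
        have lt: "M - x < r" using x M2 True by auto
        have "M - (M - x) \<in> S" unfolding M_def by (rule run_in) (use lt in \<open>simp add: r_def M_def\<close>)
        then show "x \<in> S" using x by simp
      qed
    qed
    have "r \<le> M - (s - 1)"
    proof -
      have "s - 1 \<notin> S" using smin s1 by fastforce
      moreover have "M - (M - (s - 1)) = s - 1" using M2 s1 sS Mmax by fastforce
      ultimately show ?thesis unfolding r_def M_def by (metis M_def run_le)
    qed
    then have "M = 2 * s - 1" using True M2 s1 by linarith
    moreover have d: "(2 * s - 1) div 2 + 1 = s" using s1 by (cases s) simp_all
    ultimately have "S = FS (2 * s - 1)" unfolding FS_def Seq by simp
    then show ?thesis by blast
  next
    case False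
    then have M2: "M = 2 * r" using nB by simp
    have "S = {r + 1 .. 2 * r}"
    proof
      show "S \<subseteq> {r + 1 .. 2 * r}" using smin Mmax M2 False by fastforce
      show "{r + 1 .. 2 * r} \<subseteq> S"
      proof
        fix x assume x: "x \<in> {r + 1 .. 2 * r}"
        have lt: "M - x < r" using x M2 by auto
        have "M - (M - x) \<in> S" unfolding M_def by (rule run_in) (use lt in \<open>simp add: r_def M_def\<close>)
        then show "x \<in> S" using x M2 by simp
      qed
    qed
    then have "S = FS (2 * r)" unfolding FS_def by simp
    then show ?thesis by blast
  qed
qed

lemma FS_fixed: "fr (FS j) = FS j"
proof (cases "j = 0")
  case True then show ?thesis by (simp add: FS_def fr_def)
next
  case False
  define h where "h = j div 2"
  have S: "FS j = {h+1..j}" unfolding FS_def h_def by simp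
  have ne: "FS j \<noteq> {}" using False unfolding S h_def by auto
  have mn: "Min (FS j) = h + 1" unfolding S using False h_def by (intro Min_eqI) auto
  have mx: "Max (FS j) = j" unfolding S using False h_def by (intro Max_eqI) auto
  have rn: "run (FS j) = j - h" unfolding run_def
  proof (rule Least_equality)
    show "Max (FS j) - (j - h) \<notin> FS j" unfolding mx unfolding S h_def by simp
    fix y assume "Max (FS j) - y \<notin> FS j"
    then have "j - y \<notin> FS j" by (simp add: mx)
    then show "j - h \<le> y" unfolding S by auto
  qed
  have c1: "\<not> (Min (FS j) \<le> run (FS j) \<and> 2 * Min (FS j) \<le> Max (FS j))"
    unfolding mn mx rn h_def by auto
  have c2: "\<not> (run (FS j) < Min (FS j) \<and> Max (FS j) \<noteq> 2 * run (FS j))"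
    unfolding mn mx rn h_def by auto
  show ?thesis unfolding fr_def Let_def using ne c1 c2 by auto
qed


lemma fr_DP:
  assumes "S \<in> DP d" shows "fr S \<in> DP d \<and> fr (fr S) = S"
proof (cases "S = {}")
  case True then show ?thesis using assms by (simp add: fr_def)
next
  case ne: False
  have fin: "finite S" and z: "0 \<notin> S" and sd: "\<Sum>S = d" using assms by (auto simp: DP_def)
  show ?thesis
  proof (cases "Min S \<le> run S \<and> 2 * Min S \<le> Max S")
    case True
    then have "fr S = insert (Max S + 1) (S - {Min S, Max S + 1 - Min S})"
      unfolding fr_def using ne by (simp add: Let_def)
    then show ?thesis using A_step[OF fin ne z] True sd by (simp add: DP_def)
  next
    case nA: False
    show ?thesis
    proof (cases "run S < Min S \<and> Max S \<noteq> 2 * run S")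
      case True
      then have "fr S = insert (run S) (insert (Max S - run S) (S - {Max S}))"
        unfolding fr_def Let_def using ne nA by auto
      then show ?thesis using B_step[OF fin ne z] True sd z by (simp add: DP_def)
    next
      case False
      then have "fr S = S" unfolding fr_def Let_def using ne nA by auto
      then show ?thesis using assms by simp
    qed
  qed
qed

definition Pf :: "nat \<Rightarrow> nat" where "Pf j = \<Sum>(FS j)"

lemma Pf_Suc_even: "even j \<Longrightarrow> Pf (Suc j) = Pf j + Suc j"
proof -
  assume e: "even j"
  then have "Suc j div 2 = j div 2" by presburger
  then have "FS (Suc j) = insert (Suc j) (FS j)" unfolding FS_def by auto
  then show ?thesis unfolding Pf_def by (simp add: FS_def)
qed

lemma Pf_Suc_odd: "odd j \<Longrightarrow> Pf (Suc j) + (j div 2 + 1) = Pf j + Suc j"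
proof -
  assume o: "odd j"
  define h where "h = j div 2"
  then have hs: "Suc j div 2 = h + 1" using o by presburger
  have hj: "h + 1 \<le> j" using o unfolding h_def by presburger
  have "FS j = {h+1..j}" unfolding FS_def h_def by simp
  have A: "\<Sum>{h+1..Suc j} = (h+1) + \<Sum>{h+2..Suc j}"
    using sum.atLeast_Suc_atMost[of "h+1" "Suc j" "\<lambda>x. x"] hj by simp
  have B: "\<Sum>{h+1..Suc j} = \<Sum>{h+1..j} + Suc j"
    using sum.nat_ivl_Suc'[of "h+1" j "\<lambda>x. x"] hj by simp
  show ?thesis unfolding Pf_def FS_def hs h_def[symmetric] using A B by simp
qed

lemma Pf_strict: "Pf j < Pf (Suc j)"
proof (cases "even j")
  case True then show ?thesis by (simp add: Pf_Suc_even)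
next
  case False
  have "j div 2 + 1 < Suc j" using False by presburger
  then show ?thesis using Pf_Suc_odd[OF False] by linarith
qed

lemma Pf_smono: "strict_mono Pf"
  unfolding strict_mono_Suc_iff using Pf_strict by blast

lemma Pf_le: "Pf j \<le> j * j"
proof -
  have "Pf j \<le> card (FS j) * j" unfolding Pf_def
    using sum_bounded_above[of "FS j" "\<lambda>x. x" j] by (auto simp: FS_def)
  also have "card (FS j) \<le> j" by (simp add: FS_def)
  then have "card (FS j) * j \<le> j * j" by simp
  finally show ?thesis .
qed

lemma fixset: "{S \<in> DP d. fr S = S} = FS ` {j. Pf j = d}"
proof
  show "{S \<in> DP d. fr S = S} \<subseteq> FS ` {j. Pf j = d}"
  proof
    fix S assume "S \<in> {S \<in> DP d. fr S = S}"
    then have S: "finite S" "0 \<notin> S" "\<Sum>S = d" "fr S = S" by (auto simp: DP_def)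
    then obtain j where "S = FS j" using fixed_FS by blast
    then show "S \<in> FS ` {j. Pf j = d}" using S by (auto simp: Pf_def)
  qed
  show "FS ` {j. Pf j = d} \<subseteq> {S \<in> DP d. fr S = S}"
  proof
    fix S assume "S \<in> FS ` {j. Pf j = d}"
    then obtain j where S: "S = FS j" "Pf j = d" by auto
    have "finite (FS j)" "0 \<notin> FS j" by (auto simp: FS_def)
    then show "S \<in> {S \<in> DP d. fr S = S}" using S FS_fixed[of j] by (auto simp: DP_def Pf_def)
  qed
qed

lemma card_fixset: "card {S \<in> DP d. fr S = S} = (if d \<in> range Pf then 1 else 0)"
proof -
  have inj: "inj Pf" by (rule strict_mono_imp_inj_on[OF Pf_smono])
  show ?thesis
  proof (cases "d \<in> range Pf")
    case True
    then obtain j where j: "Pf j = d" by auto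
    have e: "{j'. Pf j' = d} = {j}"
    proof (rule set_eqI)
      fix x show "x \<in> {j'. Pf j' = d} \<longleftrightarrow> x \<in> {j}" using inj j unfolding inj_def by auto
    qed
    have "card {S \<in> DP d. fr S = S} = card (FS ` {j})" by (simp only: fixset e)
    also have "\<dots> = 1" by simp
    finally show ?thesis using True by simp
  next
    case False
    then have e: "{j. Pf j = d} = {}" by auto
    have "card {S \<in> DP d. fr S = S} = card (FS ` {})" by (simp only: fixset e)
    then show ?thesis using False by simp
  qed
qed

lemma Qd_parity: "odd (Qd d) \<longleftrightarrow> d \<in> range Pf"
proof -
  have "even (card (DP d) + card {S \<in> DP d. fr S = S})"
  proof (rule card_parity_involution)
    show "finite (DP d)" by (rule finite_DP)
  next
    fix S assume "S \<in> DP d"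
    then show "fr S \<in> DP d" using fr_DP by blast
  next
    fix S assume "S \<in> DP d"
    then show "fr (fr S) = S" using fr_DP by blast
  qed
  then have "even (Qd d + (if d \<in> range Pf then 1 else 0))" unfolding Qd_def card_fixset .
  then show ?thesis by (cases "d \<in> range Pf") auto
qed



lemma sum_mod2_cong:
  assumes "\<And>x. x \<in> X \<Longrightarrow> (f x :: nat) mod 2 = g x mod 2"
  shows "(sum f X) mod 2 = (sum g X) mod 2"
proof -
  have "(sum f X) mod 2 = (\<Sum>x\<in>X. f x mod 2) mod 2" by (simp add: mod_sum_eq)
  also have "(\<Sum>x\<in>X. f x mod 2) = (\<Sum>x\<in>X. g x mod 2)" using assms by (rule sum.cong[OF refl])
  also have "(\<Sum>x\<in>X. g x mod 2) mod 2 = (sum g X) mod 2" by (simp add: mod_sum_eq)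
  finally show ?thesis .
qed

lemma card_filter_sum: "finite X \<Longrightarrow> card {x\<in>X. P x} = (\<Sum>x\<in>X. if P x then 1 else 0)"
  using sum.inter_filter[of X "\<lambda>_. 1::nat" P] by simp

definition Jx :: "nat \<Rightarrow> nat \<Rightarrow> nat multiset \<Rightarrow> nat" where
  "Jx A a M = (LEAST j. a + j * A \<notin># M)"

lemma Jx_wit:
  fixes a A :: nat and M :: "nat multiset"
  assumes "1 \<le> a" "1 \<le> A" shows "a + sum_mset M * A \<notin># M"
proof
  assume "a + sum_mset M * A \<in># M"
  then have "a + sum_mset M * A \<le> sum_mset M" by (rule mem_le_sum_mset)
  moreover have "sum_mset M \<le> sum_mset M * A" using assms by simp
  ultimately show False using assms by linarith
qed

lemma Jx_notin: "1 \<le> (a::nat) \<Longrightarrow> 1 \<le> A \<Longrightarrow> a + Jx A a M * A \<notin># M"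
  unfolding Jx_def by (rule LeastI[of _ "sum_mset M"]) (rule Jx_wit)

lemma Jx_in: "i < Jx A a M \<Longrightarrow> a + i * A \<in># M"
  unfolding Jx_def using not_less_Least by blast

lemma Jx_le: "a + j * A \<notin># M \<Longrightarrow> Jx A a M \<le> j"
  unfolding Jx_def by (rule Least_le)

lemma mex_eq:
  fixes a A :: nat
  assumes "1 \<le> a" "a \<le> A" shows "mex A a M = a + Jx A a M * A"
  unfolding mex_def
proof (rule Least_equality)
  show "0 < a + Jx A a M * A \<and> (a + Jx A a M * A) mod A = a mod A \<and> a + Jx A a M * A \<notin># M"
    using assms Jx_notin[of a A M] by simp
next
  fix y assume y: "0 < y \<and> y mod A = a mod A \<and> y \<notin># M"
  have ay: "a \<le> y"
  proof (cases "a = A")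
    case True
    then have "A dvd y" using y by (simp add: mod_eq_0_iff_dvd)
    then show ?thesis using y True by (simp add: dvd_imp_le)
  next
    case False
    then have "a mod A = a" using assms by simp
    then show ?thesis using y by (metis mod_less_eq_dividend)
  qed
  then have "A dvd y - a" using y by (simp add: mod_eq_dvd_iff_nat)
  then obtain j where j: "y - a = A * j" by (auto elim: dvdE)
  then have yj: "y = a + j * A" using ay by (simp add: mult.commute)
  then have "Jx A a M \<le> j" using y by (intro Jx_le) simp
  then show "a + Jx A a M * A \<le> y" using yj by simp
qed

lemma mex_parity:
  fixes a A j :: nat
  assumes "1 \<le> a" "a \<le> A"
  shows "(a + j * A) mod (2 * A) = a mod (2 * A) \<longleftrightarrow> even j"
proof (cases "even j")
  case True
  then obtain i where "j = 2 * i" by blast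
  then have e: "a + j * A = a + i * (2 * A)" by (simp add: algebra_simps)
  have "(a + j * A) mod (2 * A) = a mod (2 * A)" unfolding e by (rule mod_mult_self1)
  with True show ?thesis by simp
next
  case False
  then obtain i where "j = 2 * i + 1" using oddE by blast
  then have e: "a + j * A = (a + A) + i * (2 * A)" by (simp add: algebra_simps)
  have am: "a mod (2 * A) = a" using assms by simp
  have "(a + A) mod (2 * A) \<noteq> a"
  proof (cases "a = A")
    case True
    then have "a + A = 2 * A" by simp
    then have "(a + A) mod (2 * A) = 0" by (simp only: mod_self)
    then show ?thesis using assms by simp
  next
    case False then have "a + A < 2 * A" using assms by simp
    then show ?thesis using assms by simp
  qed
  moreover have "(a + j * A) mod (2 * A) = (a + A) mod (2 * A)" unfolding e by (rule mod_mult_self1)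
  ultimately show ?thesis using False am by simp
qed

lemma pmex_J:
  assumes "1 \<le> a" "a \<le> A"
  shows "p_mex A a n = card {M \<in> partitions n. even (Jx A a M)}"
  unfolding p_mex_def using mex_eq[OF assms] mex_parity[OF assms] by simp

definition sj :: "nat \<Rightarrow> nat \<Rightarrow> nat \<Rightarrow> nat" where "sj A a j = (\<Sum>i<j. a + i * A)"
definition Bj :: "nat \<Rightarrow> nat \<Rightarrow> nat \<Rightarrow> nat multiset" where
  "Bj A a j = mset_set ((\<lambda>i. a + i * A) ` {..<j})"

lemma Bj_sub_iff: "Bj A a j \<subseteq># M \<longleftrightarrow> (\<forall>i<j. a + i * A \<in># M)"
proof
  assume "Bj A a j \<subseteq># M"
  then have "set_mset (Bj A a j) \<subseteq> set_mset M" by (rule set_mset_mono)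
  then show "\<forall>i<j. a + i * A \<in># M" unfolding Bj_def by auto
next
  assume h: "\<forall>i<j. a + i * A \<in># M"
  have "Bj A a j \<subseteq># mset_set (set_mset M)" unfolding Bj_def
    by (rule subset_imp_msubset_mset_set) (use h in auto)
  then show "Bj A a j \<subseteq># M" using mset_set_set_mset_msubset subset_mset.order_trans by blast
qed

lemma sum_Bj: "1 \<le> A \<Longrightarrow> sum_mset (Bj A a j) = sj A a j"
proof -
  assume A: "1 \<le> A"
  have inj: "inj_on (\<lambda>i. a + i * A) {..<j}" using A by (auto simp: inj_on_def)
  have "sum_mset (Bj A a j) = \<Sum>((\<lambda>i. a + i * A) ` {..<j})"
    unfolding Bj_def by (simp add: sum_unfold_sum_mset)
  also have "\<dots> = sj A a j" unfolding sj_def by (simp add: sum.reindex[OF inj])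
  finally show ?thesis .
qed

lemma J_ge_iff: "1 \<le> (a::nat) \<Longrightarrow> 1 \<le> A \<Longrightarrow> j \<le> Jx A a M \<longleftrightarrow> (\<forall>i<j. a + i * A \<in># M)"
  by (metis Jx_in Jx_notin leI less_le_trans)

definition Cj :: "nat \<Rightarrow> nat \<Rightarrow> nat \<Rightarrow> nat \<Rightarrow> nat multiset set" where
  "Cj A a j n = {M \<in> partitions n. j \<le> Jx A a M}"

lemma card_Cj:
  assumes "1 \<le> a" "a \<le> A"
  shows "card (Cj A a j n) = (if sj A a j \<le> n then pp (n - sj A a j) else 0)"
proof -
  have A: "1 \<le> A" using assms by simp
  have Cj_eq: "Cj A a j n = {M \<in> partitions n. Bj A a j \<subseteq># M}"
    unfolding Cj_def using J_ge_iff[OF assms(1) A] Bj_sub_iff by simp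
  show ?thesis
  proof (cases "sj A a j \<le> n")
    case False
    have "Cj A a j n = {}"
    proof -
      { fix M assume M: "M \<in> partitions n" "Bj A a j \<subseteq># M"
        then have "sum_mset (Bj A a j) \<le> sum_mset M"
          by (metis subset_mset.le_iff_add sum_mset.union le_add1)
        then have False using False sum_Bj[OF A] M(1) by (simp add: partitions_def) }
      then show ?thesis unfolding Cj_eq by auto
    qed
    then show ?thesis using False by simp
  next
    case True
    have pos: "\<forall>x\<in>#Bj A a j. 0 < x" unfolding Bj_def using assms by auto
    have "bij_betw (\<lambda>M. M - Bj A a j) (Cj A a j n) (partitions (n - sj A a j))"
    proof (rule bij_betw_byWitness[where f' = "\<lambda>N. N + Bj A a j"])
      show "\<forall>M\<in>Cj A a j n. M - Bj A a j + Bj A a j = M" unfolding Cj_eq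
        by (auto simp: subset_mset.diff_add)
      show "\<forall>N\<in>partitions (n - sj A a j). N + Bj A a j - Bj A a j = N" by simp
      show "(\<lambda>M. M - Bj A a j) ` Cj A a j n \<subseteq> partitions (n - sj A a j)"
        unfolding Cj_eq partitions_def using sum_Bj[OF A] by (auto simp: sum_mset_diff dest: in_diffD)
      show "(\<lambda>N. N + Bj A a j) ` partitions (n - sj A a j) \<subseteq> Cj A a j n"
        unfolding Cj_eq partitions_def using sum_Bj[OF A] True pos by auto
    qed
    then show ?thesis using True by (simp add: bij_betw_same_card pp_def)
  qed
qed

lemma J_le_n:
  assumes "1 \<le> a" "1 \<le> A" "M \<in> partitions n" shows "Jx A a M \<le> n"
proof (rule Jx_le)
  show "a + n * A \<notin># M"
  proof
    assume "a + n * A \<in># M"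
    then have "a + n * A \<le> n" using assms(3) mem_le_sum_mset by (fastforce simp: partitions_def)
    moreover have "n \<le> n * A" using assms by simp
    ultimately show False using assms by linarith
  qed
qed

lemma pmex_mod:
  assumes "1 \<le> a" "a \<le> A"
  shows "p_mex A a n mod 2 = (\<Sum>j\<le>n. card (Cj A a j n)) mod 2"
proof -
  have A: "1 \<le> A" using assms by simp
  let ?P = "partitions n"
  have fin: "finite ?P" by (rule finite_partitions)
  have "(\<Sum>j\<le>n. card (Cj A a j n)) = (\<Sum>j\<le>n. \<Sum>M\<in>?P. if j \<le> Jx A a M then 1 else 0)"
    unfolding Cj_def using card_filter_sum[OF fin] by simp
  also have "\<dots> = (\<Sum>M\<in>?P. \<Sum>j\<le>n. if j \<le> Jx A a M then 1 else 0)" by (rule sum.swap)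
  also have "\<dots> = (\<Sum>M\<in>?P. Jx A a M + 1)"
  proof (rule sum.cong[OF refl])
    fix M assume "M \<in> ?P"
    then have "Jx A a M \<le> n" using J_le_n[OF assms(1) A] by blast
    then have e: "{j \<in> {..n}. j \<le> Jx A a M} = {..Jx A a M}" by auto
    have "(\<Sum>j\<le>n. if j \<le> Jx A a M then 1 else 0) = card {j \<in> {..n}. j \<le> Jx A a M}"
      using card_filter_sum[of "{..n}" "\<lambda>j. j \<le> Jx A a M"] by simp
    then show "(\<Sum>j\<le>n. if j \<le> Jx A a M then 1 else 0) = Jx A a M + 1" using e by simp
  qed
  finally have e1: "(\<Sum>j\<le>n. card (Cj A a j n)) = (\<Sum>M\<in>?P. Jx A a M + 1)" .
  have e2: "p_mex A a n = (\<Sum>M\<in>?P. if even (Jx A a M) then 1 else 0)"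
    unfolding pmex_J[OF assms] using card_filter_sum[OF fin] by simp
  have "(\<Sum>M\<in>?P. Jx A a M + 1) mod 2 = (\<Sum>M\<in>?P. (if even (Jx A a M) then 1 else 0)) mod 2"
    by (rule sum_mod2_cong) auto
  then show ?thesis using e1 e2 by simp
qed


definition Pn :: "nat \<Rightarrow> nat set" where "Pn n = {d. d \<le> n \<and> d \<in> range Pf}"

lemma finite_Pn: "finite (Pn n)"
  unfolding Pn_def by (rule finite_subset[of _ "{..n}"]) auto

lemma EUL:
  assumes "m > 0" shows "even (\<Sum>d\<in>Pn m. pp (m - d))"
proof -
  have "(\<Sum>d\<le>m. Qd d * pp (m - d)) mod 2 = (\<Sum>d\<le>m. if d \<in> range Pf then pp (m - d) else 0) mod 2"
  proof (rule sum_mod2_cong)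
    fix d
    show "(Qd d * pp (m - d)) mod 2 = (if d \<in> range Pf then pp (m - d) else 0) mod 2"
    proof (cases "d \<in> range Pf")
      case True
      then have "Qd d mod 2 = 1" using Qd_parity[of d] by (simp add: odd_iff_mod_2_eq_one)
      then have "(Qd d * pp (m - d)) mod 2 = (1 * pp (m - d)) mod 2" by (metis mod_mult_left_eq)
      then show ?thesis using True by simp
    next
      case False
      then have "even (Qd d)" using Qd_parity[of d] by simp
      then have "even (Qd d * pp (m - d))" by simp
      then show ?thesis using False by simp
    qed
  qed
  moreover have "(\<Sum>d\<le>m. if d \<in> range Pf then pp (m - d) else 0) = (\<Sum>d\<in>Pn m. pp (m - d))"
  proof -
    have "{d \<in> {..m}. d \<in> range Pf} = Pn m" unfolding Pn_def by auto
    then show ?thesis using sum.inter_filter[of "{..m}" "\<lambda>d. pp (m - d)" "\<lambda>d. d \<in> range Pf"] by simp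
  qed
  moreover have "even (\<Sum>d\<le>m. Qd d * pp (m - d))" using even_conv[OF assms] .
  ultimately show ?thesis by (simp add: even_iff_mod_2_eq_zero)
qed

lemma sj_ge: "1 \<le> a \<Longrightarrow> j \<le> sj A a j"
  unfolding sj_def using sum_mono[of "{..<j}" "\<lambda>_. 1::nat" "\<lambda>i. a + i * A"] by simp

lemma KEY:
  assumes "1 \<le> a" "a \<le> A" "n \<notin> range (sj A a)"
  shows "even (\<Sum>d\<in>Pn n. p_mex A a (n - d))"
proof -
  define c where "c = (\<lambda>j k. if sj A a j \<le> k then pp (k - sj A a j) else 0)"
  have cz: "c j k = 0" if "k < j" for j k
  proof -
    have "j \<le> sj A a j" by (rule sj_ge[OF assms(1)])
    then show ?thesis unfolding c_def using that by simp
  qed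
  have "(\<Sum>d\<in>Pn n. p_mex A a (n - d)) mod 2 = (\<Sum>d\<in>Pn n. \<Sum>j\<le>n - d. c j (n - d)) mod 2"
  proof (rule sum_mod2_cong)
    fix d
    show "p_mex A a (n - d) mod 2 = (\<Sum>j\<le>n - d. c j (n - d)) mod 2"
      using pmex_mod[OF assms(1,2), of "n - d"] card_Cj[OF assms(1,2)] unfolding c_def by simp
  qed
  also have "(\<Sum>d\<in>Pn n. \<Sum>j\<le>n - d. c j (n - d)) = (\<Sum>d\<in>Pn n. \<Sum>j\<le>n. c j (n - d))"
  proof (rule sum.cong[OF refl])
    fix d assume "d \<in> Pn n"
    show "(\<Sum>j\<le>n - d. c j (n - d)) = (\<Sum>j\<le>n. c j (n - d))"
    proof (rule sum.mono_neutral_left)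
      show "finite {..n}" by simp
      show "{..n - d} \<subseteq> {..n}" by auto
      show "\<forall>i\<in>{..n} - {..n - d}. c i (n - d) = 0" using cz by auto
    qed
  qed
  also have "(\<Sum>d\<in>Pn n. \<Sum>j\<le>n. c j (n - d)) = (\<Sum>j\<le>n. \<Sum>d\<in>Pn n. c j (n - d))"
    by (rule sum.swap)
  finally have e: "(\<Sum>d\<in>Pn n. p_mex A a (n - d)) mod 2 = (\<Sum>j\<le>n. \<Sum>d\<in>Pn n. c j (n - d)) mod 2" .
  have "even (\<Sum>j\<le>n. \<Sum>d\<in>Pn n. c j (n - d))"
  proof (rule dvd_sum)
    fix j assume "j \<in> {..n}"
    show "even (\<Sum>d\<in>Pn n. c j (n - d))"
    proof (cases "sj A a j \<le> n")
      case False
      then have "\<forall>d\<in>Pn n. c j (n - d) = 0" unfolding c_def by auto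
      then show ?thesis by simp
    next
      case True
      define m where "m = n - sj A a j"
      have "n \<noteq> sj A a j" using assms(3) by auto
      then have m0: "m > 0" using True unfolding m_def by simp
      have "(\<Sum>d\<in>Pn n. c j (n - d)) = (\<Sum>d\<in>Pn n. if d \<in> Pn m then pp (m - d) else 0)"
      proof (rule sum.cong[OF refl])
        fix d assume "d \<in> Pn n"
        then have dn: "d \<le> n" "d \<in> range Pf" unfolding Pn_def by auto
        show "c j (n - d) = (if d \<in> Pn m then pp (m - d) else 0)"
          unfolding c_def Pn_def m_def using dn True by (auto simp: algebra_simps)
      qed
      also have "\<dots> = (\<Sum>d\<in>{d \<in> Pn n. d \<in> Pn m}. pp (m - d))"
        by (rule sum.inter_filter[symmetric]) (rule finite_Pn)
      also have "{d \<in> Pn n. d \<in> Pn m} = Pn m" unfolding Pn_def m_def by auto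
      finally show ?thesis using EUL[OF m0] by simp
    qed
  qed
  then show ?thesis using e by (simp add: even_iff_mod_2_eq_zero)
qed

lemma exists_even:
  assumes "1 \<le> a" "a \<le> A" "n \<notin> range (sj A a)" "odd (card (Pn n))"
  shows "\<exists>d\<in>Pn n. even (p_mex A a (n - d))"
proof (rule ccontr)
  assume "\<not> ?thesis"
  then have h: "\<forall>d\<in>Pn n. odd (p_mex A a (n - d))" by auto
  have "(\<Sum>d\<in>Pn n. p_mex A a (n - d)) mod 2 = (\<Sum>d\<in>Pn n. 1) mod 2"
    by (rule sum_mod2_cong) (use h in \<open>auto simp: odd_iff_mod_2_eq_one\<close>)
  then have "odd (\<Sum>d\<in>Pn n. p_mex A a (n - d))" using assms(4)
    by (simp add: odd_iff_mod_2_eq_one)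
  then show False using KEY[OF assms(1-3)] by simp
qed

lemma Pn_interval:
  assumes "Pf (2*k) \<le> n" "n < Pf (2*k+1)" shows "Pn n = Pf ` {..2*k}"
proof
  show "Pn n \<subseteq> Pf ` {..2*k}"
  proof
    fix d assume "d \<in> Pn n"
    then obtain j where d: "d = Pf j" "Pf j \<le> n" unfolding Pn_def by auto
    then have "Pf j < Pf (2*k+1)" using assms by simp
    then have "j < 2*k+1" using strict_mono_less[OF Pf_smono] by blast
    then show "d \<in> Pf ` {..2*k}" using d by auto
  qed
  show "Pf ` {..2*k} \<subseteq> Pn n"
  proof
    fix d assume "d \<in> Pf ` {..2*k}"
    then obtain j where j: "j \<le> 2*k" "d = Pf j" by auto
    then have "d \<le> Pf (2*k)" using strict_mono_less_eq[OF Pf_smono] by blast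
    then show "d \<in> Pn n" unfolding Pn_def using assms j by auto
  qed
qed

lemma card_Pn_interval:
  assumes "Pf (2*k) \<le> n" "n < Pf (2*k+1)" shows "card (Pn n) = 2*k+1"
proof -
  have inj: "inj Pf" by (rule strict_mono_imp_inj_on[OF Pf_smono])
  have "card (Pf ` {..2*k}) = card {..2*k}" by (rule card_image) (rule inj_on_subset[OF inj], simp)
  then show ?thesis using Pn_interval[OF assms] by simp
qed

definition Oc :: "nat \<Rightarrow> nat" where "Oc x = card {n. n < x \<and> odd (card (Pn n))}"

lemma Oc_mono: "x \<le> y \<Longrightarrow> Oc x \<le> Oc y"
  unfolding Oc_def by (rule card_mono) auto

lemma Oc_step: "Oc (Pf (2*k+1)) = Oc (Pf (2*k)) + (2*k+1)"
proof -
  have lr: "Pf (2*k) < Pf (2*k+1)" using Pf_strict[of "2*k"] by simp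
  have d: "Pf (2*k+1) = Pf (2*k) + (2*k+1)" using Pf_Suc_even[of "2*k"] by simp
  have "{n. n < Pf (2*k+1) \<and> odd (card (Pn n))} =
        {n. n < Pf (2*k) \<and> odd (card (Pn n))} \<union> {Pf (2*k)..<Pf (2*k+1)}"
  proof (rule set_eqI)
    fix n
    show "n \<in> {n. n < Pf (2*k+1) \<and> odd (card (Pn n))} \<longleftrightarrow>
          n \<in> {n. n < Pf (2*k) \<and> odd (card (Pn n))} \<union> {Pf (2*k)..<Pf (2*k+1)}"
    proof (cases "Pf (2*k) \<le> n \<and> n < Pf (2*k+1)")
      case True
      then have "card (Pn n) = 2*k+1" using card_Pn_interval by blast
      then show ?thesis using True by auto
    next
      case False
      then show ?thesis using lr by auto
    qed
  qed
  moreover have "card ({n. n < Pf (2*k) \<and> odd (card (Pn n))} \<union> {Pf (2*k)..<Pf (2*k+1)}) =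
      card {n. n < Pf (2*k) \<and> odd (card (Pn n))} + card {Pf (2*k)..<Pf (2*k+1)}"
    by (rule card_Un_disjoint) auto
  ultimately show ?thesis unfolding Oc_def using d by simp
qed

lemma Oc_lower: "K * K \<le> Oc (Pf (2*K))"
proof (induction K)
  case 0 then show ?case by simp
next
  case (Suc K)
  have "Pf (2*K+1) \<le> Pf (2 * Suc K)" using strict_mono_less_eq[OF Pf_smono] by simp
  then have "Oc (Pf (2*K+1)) \<le> Oc (Pf (2 * Suc K))" by (rule Oc_mono)
  then show ?case using Oc_step[of K] Suc.IH by simp
qed

lemma sj_sq: "1 \<le> a \<Longrightarrow> 1 \<le> A \<Longrightarrow> i * i \<le> 2 * sj A a i"
proof (induction i)
  case 0 then show ?case by (simp add: sj_def)
next
  case (Suc i)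
  have e: "sj A a (Suc i) = sj A a i + (a + i * A)" by (simp add: sj_def)
  have iA: "i \<le> i * A" using Suc.prems by simp
  have ih: "i * i \<le> 2 * sj A a i" using Suc.IH Suc.prems by simp
  have sq: "Suc i * Suc i = i * i + 2 * i + 1" by simp
  have "2 * i + 1 \<le> 2 * a + 2 * (i * A)" using iA Suc.prems by linarith
  then show ?case unfolding sq e using ih by simp
qed

lemma main_count:
  assumes "1 \<le> a" "a \<le> A"
  shows "K * K \<le> 3 * K + 2 * K * card {n. n < Pf (2*K) \<and> even (p_mex A a n)}"
proof -
  have A1: "1 \<le> A" using assms by simp
  define N where "N = Pf (2*K)"
  define Ev where "Ev = {n. n < N \<and> even (p_mex A a n)}"
  define Od where "Od = {n. n < N \<and> odd (card (Pn n))}"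
  define Ss where "Ss = {n. n < N \<and> n \<in> range (sj A a)}"
  define Pe where "Pe = {d. d < N \<and> d \<in> range Pf}"
  have finEv: "finite Ev" "finite Pe" "finite Ss" "finite Od" unfolding Ev_def Pe_def Ss_def Od_def by auto
  have cover: "Od - Ss \<subseteq> (\<lambda>(e, d). e + d) ` (Ev \<times> Pe)"
  proof
    fix n assume n: "n \<in> Od - Ss"
    then have n1: "n \<notin> range (sj A a)" "odd (card (Pn n))" "n < N" unfolding Od_def Ss_def by auto
    then obtain d where d: "d \<in> Pn n" "even (p_mex A a (n - d))" using exists_even[OF assms] by blast
    then have dn: "d \<le> n" "d \<in> range Pf" unfolding Pn_def by auto
    then have "n - d \<in> Ev" "d \<in> Pe" using d n1 unfolding Ev_def Pe_def by auto
    then have "(n - d, d) \<in> Ev \<times> Pe" by simp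
    moreover have "n = (\<lambda>(e, d). e + d) (n - d, d)" using dn by simp
    ultimately show "n \<in> (\<lambda>(e, d). e + d) ` (Ev \<times> Pe)" by blast
  qed
  have "card (Od - Ss) \<le> card ((\<lambda>(e, d). e + d) ` (Ev \<times> Pe))"
    by (rule card_mono) (use finEv cover in auto)
  also have "\<dots> \<le> card (Ev \<times> Pe)" by (rule card_image_le) (use finEv in simp)
  also have "\<dots> = card Ev * card Pe" by (rule card_cartesian_product)
  finally have c1: "card (Od - Ss) \<le> card Ev * card Pe" .
  have "Pe \<subseteq> Pf ` {..<2*K}"
  proof
    fix d assume "d \<in> Pe"
    then obtain j where j: "d = Pf j" "Pf j < Pf (2*K)" unfolding Pe_def N_def by auto
    then have "j < 2*K" using strict_mono_less[OF Pf_smono] by blast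
    then show "d \<in> Pf ` {..<2*K}" using j by auto
  qed
  then have "card Pe \<le> card (Pf ` {..<2*K})" by (rule card_mono[rotated]) simp
  also have "\<dots> \<le> 2*K" using card_image_le[of "{..<2*K}" Pf] by simp
  finally have c2: "card Pe \<le> 2*K" .
  have NK: "N \<le> 4 * (K * K)" unfolding N_def using Pf_le[of "2*K"] by simp
  have "Ss \<subseteq> sj A a ` {..<3*K}"
  proof
    fix n assume "n \<in> Ss"
    then obtain i where i: "n = sj A a i" "sj A a i < N" unfolding Ss_def by auto
    have "i < 3*K"
    proof (rule ccontr)
      assume "\<not> i < 3*K"
      then have "3*K \<le> i" by simp
      then have "(3*K) * (3*K) \<le> i * i" using mult_le_mono by blast
      moreover have "i * i \<le> 2 * sj A a i" by (rule sj_sq[OF assms(1) A1])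
      moreover have "(3*K) * (3*K) = 9 * (K * K)" by simp
      ultimately show False using i NK by linarith
    qed
    then show "n \<in> sj A a ` {..<3*K}" using i by auto
  qed
  then have "card Ss \<le> card (sj A a ` {..<3*K})" by (rule card_mono[rotated]) simp
  also have "\<dots> \<le> 3*K" using card_image_le[of "{..<3*K}" "sj A a"] by simp
  finally have c3: "card Ss \<le> 3*K" .
  have c4: "K * K \<le> card Od" using Oc_lower[of K] unfolding Oc_def Od_def N_def by simp
  have "Od \<subseteq> (Od - Ss) \<union> Ss" by auto
  then have "card Od \<le> card ((Od - Ss) \<union> Ss)" by (rule card_mono[rotated]) (use finEv in simp)
  also have "\<dots> \<le> card (Od - Ss) + card Ss" by (rule card_Un_le)
  finally have c5: "card Od \<le> card (Od - Ss) + card Ss" .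
  have "card Ev * card Pe \<le> card Ev * (2*K)" using c2 by simp
  then have "K * K \<le> card Ev * (2 * K) + 3 * K" using c1 c3 c4 c5 by linarith
  then show ?thesis unfolding Ev_def N_def by (simp add: algebra_simps)
qed


theorem theorem1p1:
  fixes t m :: nat
  assumes "0 < t" and "0 < m"
  shows "\<exists>c :: real. c > 0 \<and> (\<exists>X0 :: real. \<forall>X :: real. X \<ge> X0 \<longrightarrow>
           real (card {n :: nat. 1 \<le> n \<and> real n \<le> X \<and> even (p_mex (m * t) t n)})
             \<ge> c * sqrt (X / 3))"
proof -
  have a1: "1 \<le> t" "t \<le> m * t" using assms by auto
  define E where "E = (\<lambda>K. card {n. n < Pf (2*K) \<and> even (p_mex (m*t) t n)})"
  have key: "K \<le> 3 + 2 * E K" for K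
  proof (cases "K = 0")
    case True then show ?thesis by simp
  next
    case False
    have "K * K \<le> 3 * K + 2 * K * E K" using main_count[OF a1] unfolding E_def by blast
    then have "K * K \<le> K * (3 + 2 * E K)" by (simp add: algebra_simps)
    then show ?thesis using False by simp
  qed
  have main: "1/8 * sqrt (X / 3) \<le> real (card {n :: nat. 1 \<le> n \<and> real n \<le> X \<and> even (p_mex (m * t) t n)})"
    if X: "576 \<le> X" for X :: real
  proof -
    define C where "C = card {n :: nat. 1 \<le> n \<and> real n \<le> X \<and> even (p_mex (m * t) t n)}"
    define K where "K = nat \<lfloor>sqrt X / 2\<rfloor>"
    have X0: "0 \<le> X" using X by simp
    have sX: "24 \<le> sqrt X"
    proof -
      have "sqrt 576 \<le> sqrt X" using X by (rule real_sqrt_le_mono)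
      moreover have "sqrt 576 = (24::real)" using real_sqrt_unique[of 24 576] by simp
      ultimately show ?thesis by simp
    qed
    have y0: "0 \<le> sqrt X / 2" using X0 by simp
    have rK: "real K = of_int \<lfloor>sqrt X / 2\<rfloor>" unfolding K_def using y0 by simp
    have Kle: "real K \<le> sqrt X / 2" using rK floor_correct[of "sqrt X / 2"] by simp
    have Kge: "sqrt X / 2 - 1 \<le> real K" using rK floor_correct[of "sqrt X / 2"] by simp
    have NX: "real (Pf (2*K)) \<le> X"
    proof -
      have "real (Pf (2*K)) \<le> real (2*K * (2*K))" using Pf_le[of "2*K"] by (simp only: of_nat_le_iff)
      also have "\<dots> = (2 * real K)^2" by (simp add: power2_eq_square)
      also have "\<dots> \<le> (sqrt X)^2" by (rule power_mono) (use Kle in simp_all)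
      also have "\<dots> = X" using X0 by simp
      finally show ?thesis .
    qed
    let ?T = "{n :: nat. 1 \<le> n \<and> real n \<le> X \<and> even (p_mex (m * t) t n)}"
    let ?S = "{n. n < Pf (2*K) \<and> even (p_mex (m*t) t n)}"
    have finT: "finite ?T"
    proof (rule finite_subset[of _ "{..nat \<lceil>X\<rceil>}"])
      show "?T \<subseteq> {..nat \<lceil>X\<rceil>}"
      proof
        fix n assume "n \<in> ?T"
        then have "real n \<le> X" by simp
        also have "X \<le> real (nat \<lceil>X\<rceil>)" by (rule real_nat_ceiling_ge)
        finally show "n \<in> {..nat \<lceil>X\<rceil>}" by simp
      qed
    qed simp
    have sub: "?S - {0} \<subseteq> ?T"
    proof
      fix n assume n: "n \<in> ?S - {0}"
      then have "real n \<le> real (Pf (2*K))" by simp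
      then have "real n \<le> X" using NX by linarith
      then show "n \<in> ?T" using n by auto
    qed
    have "card ?S - 1 \<le> card (?S - {0})" using diff_card_le_card_Diff[of "{0}" ?S] by simp
    also have "\<dots> \<le> C" unfolding C_def by (rule card_mono[OF finT sub])
    finally have "E K \<le> C + 1" unfolding E_def by simp
    then have "K \<le> 5 + 2 * C" using key[of K] by simp
    then have "real K \<le> 5 + 2 * real C" by simp
    then have "sqrt X / 4 - 3 \<le> real C" using Kge by simp
    moreover have "sqrt X / 8 \<le> sqrt X / 4 - 3" using sX by simp
    moreover have "sqrt (X / 3) \<le> sqrt X" by (rule real_sqrt_le_mono) (use X0 in simp)
    ultimately have "1/8 * sqrt (X / 3) \<le> real C" by linarith
    then show ?thesis unfolding C_def .
  qed
  have "\<forall>X::real. X \<ge> 576 \<longrightarrow> 1/8 * sqrt (X / 3) \<le> real (card {n :: nat. 1 \<le> n \<and> real n \<le> X \<and> even (p_mex (m * t) t n)})"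
    using main by blast
  then have "(1/8::real) > 0 \<and> (\<exists>X0 :: real. \<forall>X :: real. X \<ge> X0 \<longrightarrow>
           real (card {n :: nat. 1 \<le> n \<and> real n \<le> X \<and> even (p_mex (m * t) t n)})
             \<ge> 1/8 * sqrt (X / 3))" by auto
  then show ?thesis by blast
qed

end
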